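(* For all processes $s,t$, $D_{\mathcal{L}}(s,t)=0$ if and only if $s$ and $t$ are strong probabilistic trace equivalent.
   Context: PTS $(\mathcal{S},A,\to)$ with finitely supported distributions; processes image-finite and finite. Computations $c=s_0\xrightarrow{a_1}\cdots\xrightarrow{a_n}s_n$ via transitions $s_{i-1}\xrightarrow{a_i}\pi_i$, $s_i\in\mathrm{supp}(\pi_i)$; $\Pr(c)=\prod\pi_i(s_i)$ (empty: 1); $|c|=n$; $\mathrm{tr}(c)=a_1\cdots a_n$; $\mathcal{C}(z,\alpha)$ computations from $z$ with trace $\alpha$; maximal = not a proper prefix of another computation from the same process; $\mathcal{C}_{\max}(z)$; $\Pr$ of a set is the sum. A resolution of $s$ is a PTS $\mathcal{Z}=(Z,A,\to_{\mathcal{Z}})$ with $\mathrm{corr}\colon Z\to\mathcal{S}$ and initial state $z_s$, $\mathrm{corr}(z_s)=s$, such that $z_s$ is in no target support, every other state is in the support of a target of a transition from a different state, every $z\xrightarrow{a}_{\mathcal{Z}}\pi$ is matched by $\mathrm{corr}(z)\xrightarrow{a}\pi'$ with $\pi(z')=\pi'(\mathrm{corr}(z'))$, and each state has at most one outgoing transition; $\mathrm{res}(s)$ the set of resolutions. $s,t$ are strong probabilistic trace equivalent iff for each $\mathcal{Z}_s\in\mathrm{res}(s)$ there is $\mathcal{Z}_t\in\mathrm{res}(t)$ with $\Pr(\mathcal{C}(z_s,\alpha))=\Pr(\mathcal{C}(z_t,\alpha))$ for all $\alpha\in A^\star$, and symmetrically. Logic $\mathcal{L}$: trace formulae $\Phi::=\top\mid\langle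 a\rangle\Phi$, $\mathrm{depth}(\top)=0$, $\mathrm{depth}(\langle a\rangle\Phi)=1+\mathrm{depth}(\Phi)$; trace distribution formulae $\bigoplus_{i\in I}r_i\Phi_i$ ($I$ finite nonempty, $\Phi_i$ pairwise distinct, $r_i\in(0,1]$, $\sum r_i=1$), identified with distributions on trace formulae. $c\models\top$ always; $c\models\langle a\rangle\Phi$ iff $c=s\xrightarrow{a}c'$ with $c'\models\Phi$. $s\models\bigoplus_i r_i\Phi_i$ iff some $\mathcal{Z}\in\mathrm{res}(s)$ with initial state $z$ satisfies $\Pr(\{c\in\mathcal{C}_{\max}(z):c\models\Phi_i,|c|=\mathrm{depth}(\Phi_i)\})=r_i$ for all $i$; $\mathcal{L}(s)$ the set of formulae satisfied by $s$. $d(\Phi_1,\Phi_2)=0$ if equal, else $1$; $D(\Psi_1,\Psi_2)=\min_\omega\sum\omega(\Phi,\Phi')d(\Phi,\Phi')$ over couplings $\omega$ of $\Psi_1,\Psi_2$. Hausdorff lifting: $\mathcal{H}(D)(X,Y)=\max\{\sup_{x\in X}\inf_{y\in Y}D(x,y),\sup_{y\in Y}\inf_{x\in X}D(y,x)\}$ ($\inf\emptyset=1$, $\sup\emptyset=0$). $D_{\mathcal{L}}(s,t)=\mathcal{H}(D)(\mathcal{L}(s),\mathcal{L}(t))$. *)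

theory Defs
  imports "HOL-Probability.Probability"
begin

(* A PTS over states 's and actions 'a is given by its transition relation
   T :: ('s * 'a * 's pmf) set ; (s, a, pi) : T means  s --a--> pi. *)

type_synonym ('s,'a) pts = "('s \<times> 'a \<times> 's pmf) set"

definition pts_ok :: "('s,'a) pts \<Rightarrow> bool" where
  "pts_ok T \<longleftrightarrow> (\<forall>(s,a,\<pi>)\<in>T. finite (set_pmf \<pi>)) \<and>
                 (\<forall>s a. finite {\<pi>. (s,a,\<pi>) \<in> T})"

(* A computation  z0 --a1--> z1 ... --an--> zn  from z0 is represented by the
   list of its steps [(a1,pi1,z1),...,(an,pin,zn)], where z_{i-1} --ai--> pi_i
   and z_i in supp(pi_i). *)
fun is_comp :: "('x,'a) pts \<Rightarrow> 'x \<Rightarrow> ('a \<times> 'x pmf \<times> 'x) list \<Rightarrow> bool" where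
  "is_comp T z [] = True"
| "is_comp T z ((a,\<pi>,z')#cs) = ((z,a,\<pi>) \<in> T \<and> z' \<in> set_pmf \<pi> \<and> is_comp T z' cs)"

definition comps :: "('x,'a) pts \<Rightarrow> 'x \<Rightarrow> ('a \<times> 'x pmf \<times> 'x) list set" where
  "comps T z = {c. is_comp T z c}"

definition comp_prob :: "('a \<times> 'x pmf \<times> 'x) list \<Rightarrow> real" where
  "comp_prob c = prod_list (map (\<lambda>(a,\<pi>,z'). pmf \<pi> z') c)"

definition set_prob :: "('a \<times> 'x pmf \<times> 'x) list set \<Rightarrow> real" where
  "set_prob C = (\<Sum>c\<in>C. comp_prob c)"

definition trace_of :: "('a \<times> 'x pmf \<times> 'x) list \<Rightarrow> 'a list" where
  "trace_of c = map fst c"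

definition comps_tr :: "('x,'a) pts \<Rightarrow> 'x \<Rightarrow> 'a list \<Rightarrow> ('a \<times> 'x pmf \<times> 'x) list set" where
  "comps_tr T z \<alpha> = {c \<in> comps T z. trace_of c = \<alpha>}"

definition comps_max :: "('x,'a) pts \<Rightarrow> 'x \<Rightarrow> ('a \<times> 'x pmf \<times> 'x) list set" where
  "comps_max T z = {c \<in> comps T z. \<not> (\<exists>d. d \<noteq> [] \<and> c @ d \<in> comps T z)}"

definition finite_proc :: "('s,'a) pts \<Rightarrow> 's \<Rightarrow> bool" where
  "finite_proc T s \<longleftrightarrow> (\<exists>N. \<forall>c \<in> comps T s. length c \<le> N)"

definition is_resolution ::
  "('s,'a) pts \<Rightarrow> 's \<Rightarrow> nat set \<Rightarrow> (nat,'a) pts \<Rightarrow> (nat \<Rightarrow> 's) \<Rightarrow> nat \<Rightarrow> bool" where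
  "is_resolution T s Z TZ corr z0 \<longleftrightarrow>
     z0 \<in> Z \<and> corr z0 = s \<and>
     (\<forall>(z,a,\<pi>)\<in>TZ. z \<in> Z \<and> set_pmf \<pi> \<subseteq> Z) \<and>
     (\<forall>(z,a,\<pi>)\<in>TZ. z0 \<notin> set_pmf \<pi>) \<and>
     (\<forall>z\<in>Z. z \<noteq> z0 \<longrightarrow> (\<exists>(z',a,\<pi>)\<in>TZ. z' \<noteq> z \<and> z \<in> set_pmf \<pi>)) \<and>
     (\<forall>(z,a,\<pi>)\<in>TZ. \<exists>\<pi>'. (corr z, a, \<pi>') \<in> T \<and> inj_on corr (set_pmf \<pi>) \<and>
                         (\<forall>z'\<in>set_pmf \<pi>. pmf \<pi> z' = pmf \<pi>' (corr z'))) \<and>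
     (\<forall>(z,a,\<pi>)\<in>TZ. \<forall>(z2,b,\<rho>)\<in>TZ. z = z2 \<longrightarrow> a = b \<and> \<pi> = \<rho>)"

definition trace_equiv :: "('s,'a) pts \<Rightarrow> 's \<Rightarrow> 's \<Rightarrow> bool" where
  "trace_equiv T s t \<longleftrightarrow>
    (\<forall>Z TZ corr z. is_resolution T s Z TZ corr z \<longrightarrow>
       (\<exists>Z' TZ' corr' z'. is_resolution T t Z' TZ' corr' z' \<and>
          (\<forall>\<alpha>. set_prob (comps_tr TZ z \<alpha>) = set_prob (comps_tr TZ' z' \<alpha>)))) \<and>
    (\<forall>Z TZ corr z. is_resolution T t Z TZ corr z \<longrightarrow>
       (\<exists>Z' TZ' corr' z'. is_resolution T s Z' TZ' corr' z' \<and>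
          (\<forall>\<alpha>. set_prob (comps_tr TZ z \<alpha>) = set_prob (comps_tr TZ' z' \<alpha>))))"

datatype 'a tform = TTop | Diam 'a "'a tform"

fun depth :: "'a tform \<Rightarrow> nat" where
  "depth TTop = 0"
| "depth (Diam a \<Phi>) = Suc (depth \<Phi>)"

fun comp_sat :: "('a \<times> 'x pmf \<times> 'x) list \<Rightarrow> 'a tform \<Rightarrow> bool" where
  "comp_sat c TTop = True"
| "comp_sat [] (Diam a \<Phi>) = False"
| "comp_sat ((b,\<pi>,z')#c) (Diam a \<Phi>) = (b = a \<and> comp_sat c \<Phi>)"

definition state_sat :: "('s,'a) pts \<Rightarrow> 's \<Rightarrow> 'a tform pmf \<Rightarrow> bool" where
  "state_sat T s \<Psi> \<longleftrightarrow>
    (\<exists>Z TZ corr z. is_resolution T s Z TZ corr z \<and>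
       (\<forall>\<Phi>\<in>set_pmf \<Psi>.
          set_prob {c \<in> comps_max TZ z. comp_sat c \<Phi> \<and> length c = depth \<Phi>} = pmf \<Psi> \<Phi>))"

definition Lsat :: "('s,'a) pts \<Rightarrow> 's \<Rightarrow> 'a tform pmf set" where
  "Lsat T s = {\<Psi>. finite (set_pmf \<Psi>) \<and> state_sat T s \<Psi>}"

definition dtf :: "'a tform \<Rightarrow> 'a tform \<Rightarrow> real" where
  "dtf \<Phi>1 \<Phi>2 = (if \<Phi>1 = \<Phi>2 then 0 else 1)"

definition is_coupling :: "('b \<times> 'b) pmf \<Rightarrow> 'b pmf \<Rightarrow> 'b pmf \<Rightarrow> bool" where
  "is_coupling \<omega> \<Psi>1 \<Psi>2 \<longleftrightarrow> map_pmf fst \<omega> = \<Psi>1 \<and> map_pmf snd \<omega> = \<Psi>2"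

(* Kantorovich lifting of d (the min is attained; we write Inf) *)
definition Dtdf :: "'a tform pmf \<Rightarrow> 'a tform pmf \<Rightarrow> real" where
  "Dtdf \<Psi>1 \<Psi>2 = Inf {(\<Sum>p\<in>set_pmf \<omega>. pmf \<omega> p * dtf (fst p) (snd p)) | \<omega>. is_coupling \<omega> \<Psi>1 \<Psi>2}"

definition inf1 :: "real set \<Rightarrow> real" where
  "inf1 R = (if R = {} then 1 else Inf R)"

definition sup0 :: "real set \<Rightarrow> real" where
  "sup0 R = (if R = {} then 0 else Sup R)"

definition hausdorff :: "('b \<Rightarrow> 'b \<Rightarrow> real) \<Rightarrow> 'b set \<Rightarrow> 'b set \<Rightarrow> real" where
  "hausdorff D X Y = max (sup0 ((\<lambda>x. inf1 ((\<lambda>y. D x y) ` Y)) ` X))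
                          (sup0 ((\<lambda>y. inf1 ((\<lambda>x. D y x) ` X)) ` Y))"

definition DL :: "('s,'a) pts \<Rightarrow> 's \<Rightarrow> 's \<Rightarrow> real" where
  "DL T s t = hausdorff Dtdf (Lsat T s) (Lsat T t)"

end

theory Submission
  imports Defs
begin


fun lst :: "'x \<Rightarrow> ('a \<times> 'x pmf \<times> 'x) list \<Rightarrow> 'x" where
  "lst z [] = z" | "lst z ((a,\<pi>,z')#cs) = lst z' cs"

lemma is_comp_append: "is_comp T z (c @ d) \<longleftrightarrow> is_comp T z c \<and> is_comp T (lst z c) d"
  by (induction T z c rule: is_comp.induct) auto

lemma comp_prob_Nil[simp]: "comp_prob [] = 1" by (simp add: comp_prob_def)
lemma comp_prob_Cons[simp]: "comp_prob ((a,\<pi>,z)#c) = pmf \<pi> z * comp_prob c"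
  by (simp add: comp_prob_def)
lemma comp_prob_append: "comp_prob (c @ d) = comp_prob c * comp_prob d"
  by (simp add: comp_prob_def)
lemma comp_prob_pos: "is_comp T z c \<Longrightarrow> comp_prob c > 0"
  by (induction T z c rule: is_comp.induct) (auto simp: pmf_positive)

fun tr :: "'a tform \<Rightarrow> 'a list" where
  "tr TTop = []" | "tr (Diam a \<Phi>) = a # tr \<Phi>"
fun tf :: "'a list \<Rightarrow> 'a tform" where
  "tf [] = TTop" | "tf (a#\<alpha>) = Diam a (tf \<alpha>)"
lemma tr_tf[simp]: "tr (tf \<alpha>) = \<alpha>" by (induction \<alpha>) auto
lemma tf_tr[simp]: "tf (tr \<Phi>) = \<Phi>" by (induction \<Phi>) auto
lemma tr_inj: "tr \<Phi>1 = tr \<Phi>2 \<longleftrightarrow> \<Phi>1 = \<Phi>2" by (metis tf_tr)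

lemma sat_iff: "(comp_sat c \<Phi> \<and> length c = depth \<Phi>) \<longleftrightarrow> trace_of c = tr \<Phi>"
proof (induction c arbitrary: \<Phi>)
  case Nil then show ?case by (cases \<Phi>) (auto simp: trace_of_def)
next
  case (Cons x c) then show ?case by (cases \<Phi>; cases x) (auto simp: trace_of_def)
qed

lemma trace_of_Nil[simp]: "trace_of [] = []" by (simp add: trace_of_def)
lemma trace_of_Cons[simp]: "trace_of (x#c) = fst x # trace_of c" by (simp add: trace_of_def)
lemma trace_of_append[simp]: "trace_of (c@d) = trace_of c @ trace_of d" by (simp add: trace_of_def)
lemma length_trace_of[simp]: "length (trace_of c) = length c" by (simp add: trace_of_def)

lemma finite_S:
  assumes ok: "pts_ok T"
  shows "finite {c \<in> comps T z. trace_of c = \<alpha>}"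
proof (induction \<alpha> arbitrary: z)
  case Nil
  have "{c \<in> comps T z. trace_of c = []} \<subseteq> {[]}" by (auto simp: trace_of_def)
  then show ?case using finite_subset by blast
next
  case (Cons a \<alpha>)
  have f1: "finite {\<pi>. (z,a,\<pi>) \<in> T}" using ok by (auto simp: pts_ok_def)
  have f2: "\<And>\<pi>. (z,a,\<pi>) \<in> T \<Longrightarrow> finite (set_pmf \<pi>)" using ok by (auto simp: pts_ok_def)
  have "{c \<in> comps T z. trace_of c = a#\<alpha>} \<subseteq>
     (\<Union>\<pi>\<in>{\<pi>. (z,a,\<pi>) \<in> T}. \<Union>y\<in>set_pmf \<pi>. Cons (a,\<pi>,y) ` {c \<in> comps T y. trace_of c = \<alpha>})"
  proof
    fix c assume "c \<in> {c \<in> comps T z. trace_of c = a#\<alpha>}"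
    then obtain b \<pi> y c' where "c = (b,\<pi>,y)#c'" "b = a" "(z,a,\<pi>)\<in>T" "y \<in> set_pmf \<pi>" "is_comp T y c'" "trace_of c' = \<alpha>"
      by (cases c) (auto simp: comps_def)
    then show "c \<in> (\<Union>\<pi>\<in>{\<pi>. (z,a,\<pi>) \<in> T}. \<Union>y\<in>set_pmf \<pi>. Cons (a,\<pi>,y) ` {c \<in> comps T y. trace_of c = \<alpha>})"
      by (auto simp: comps_def)
  qed
  moreover have "finite (\<Union>\<pi>\<in>{\<pi>. (z,a,\<pi>) \<in> T}. \<Union>y\<in>set_pmf \<pi>. Cons (a,\<pi>,y) ` {c \<in> comps T y. trace_of c = \<alpha>})"
    using f1 f2 Cons by auto
  ultimately show ?case using finite_subset by blast
qed


lemma comps_prefix: "c @ d \<in> comps T z \<Longrightarrow> c \<in> comps T z"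
  by (simp add: comps_def is_comp_append)

locale dpts =
  fixes TZ :: "('x,'a) pts" and z0 :: 'x
  assumes det: "(z,a,\<pi>)\<in>TZ \<Longrightarrow> (z,b,\<rho>)\<in>TZ \<Longrightarrow> a = b \<and> \<pi> = \<rho>"
    and finsupp: "(z,a,\<pi>)\<in>TZ \<Longrightarrow> finite (set_pmf \<pi>)"
begin

definition C where "C \<alpha> = comps_tr TZ z0 \<alpha>"
definition H where "H \<alpha> = {c \<in> comps_max TZ z0. trace_of c = \<alpha>}"
definition E where "E c = {c @ [x] | x. c @ [x] \<in> comps TZ z0}"

lemma finite_len: "finite {c \<in> comps TZ z. length c \<le> n}"
proof (induction n arbitrary: z)
  case 0
  have "{c \<in> comps TZ z. length c \<le> 0} \<subseteq> {[]}" by auto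
  then show ?case using finite_subset by blast
next
  case (Suc n)
  have f1: "finite {(a,\<pi>). (z,a,\<pi>) \<in> TZ}"
  proof (cases "\<exists>a \<pi>. (z,a,\<pi>) \<in> TZ")
    case True
    then obtain a \<pi> where "(z,a,\<pi>) \<in> TZ" by blast
    then have "{(a,\<pi>). (z,a,\<pi>) \<in> TZ} \<subseteq> {(a,\<pi>)}" using det by blast
    then show ?thesis using finite_subset by blast
  next
    case False then show ?thesis by auto
  qed
  have "{c \<in> comps TZ z. length c \<le> Suc n} \<subseteq> insert []
     (\<Union>p\<in>{(a,\<pi>). (z,a,\<pi>) \<in> TZ}. \<Union>y\<in>set_pmf (snd p). Cons (fst p,snd p,y) ` {c \<in> comps TZ y. length c \<le> n})"
  proof
    fix c assume c: "c \<in> {c \<in> comps TZ z. length c \<le> Suc n}"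
    show "c \<in> insert []
     (\<Union>p\<in>{(a,\<pi>). (z,a,\<pi>) \<in> TZ}. \<Union>y\<in>set_pmf (snd p). Cons (fst p,snd p,y) ` {c \<in> comps TZ y. length c \<le> n})"
    proof (cases c)
      case Nil then show ?thesis by simp
    next
      case (Cons x c')
      then obtain b \<pi> y where "x = (b,\<pi>,y)" by (cases x) auto
      then show ?thesis using c Cons by (force simp: comps_def)
    qed
  qed
  moreover have "finite (insert []
     (\<Union>p\<in>{(a,\<pi>). (z,a,\<pi>) \<in> TZ}. \<Union>y\<in>set_pmf (snd p). Cons (fst p,snd p,y) ` {c \<in> comps TZ y. length c \<le> n}))"
    using f1 Suc finsupp by auto
  ultimately show ?case using finite_subset by blast
qed

lemma finite_C: "finite (C \<alpha>)"
proof -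
  have "C \<alpha> \<subseteq> {c \<in> comps TZ z0. length c \<le> length \<alpha>}"
    by (auto simp: C_def comps_tr_def dest: arg_cong[of _ _ length])
  then show ?thesis using finite_len finite_subset by blast
qed

lemma E_max: "c \<in> comps_max TZ z0 \<Longrightarrow> E c = {}"
  by (auto simp: E_def comps_max_def)

lemma OS:
  assumes c: "c \<in> comps TZ z0" and nm: "c \<notin> comps_max TZ z0"
  shows "comp_prob c = set_prob (E c)" "finite (E c)"
proof -
  obtain d where "d \<noteq> []" "c @ d \<in> comps TZ z0" using c nm by (auto simp: comps_max_def)
  then have "is_comp TZ (lst z0 c) d" by (simp add: comps_def is_comp_append)
  with \<open>d \<noteq> []\<close> obtain a \<pi> where tr: "(lst z0 c, a, \<pi>) \<in> TZ"
    by (cases d) auto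
  have Eeq: "E c = (\<lambda>y. c @ [(a,\<pi>,y)]) ` set_pmf \<pi>"
  proof
    show "E c \<subseteq> (\<lambda>y. c @ [(a,\<pi>,y)]) ` set_pmf \<pi>"
    proof
      fix e assume "e \<in> E c"
      then obtain x where e: "e = c @ [x]" "c @ [x] \<in> comps TZ z0" by (auto simp: E_def)
      obtain b \<rho> y where x: "x = (b,\<rho>,y)" by (cases x) auto
      with e have "(lst z0 c, b, \<rho>) \<in> TZ" "y \<in> set_pmf \<rho>"
        by (auto simp: comps_def is_comp_append)
      with tr det have "b = a" "\<rho> = \<pi>" by blast+
      with e x \<open>y \<in> set_pmf \<rho>\<close> show "e \<in> (\<lambda>y. c @ [(a,\<pi>,y)]) ` set_pmf \<pi>" by auto
    qed
    show "(\<lambda>y. c @ [(a,\<pi>,y)]) ` set_pmf \<pi> \<subseteq> E c"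
      using c tr by (auto simp: E_def comps_def is_comp_append)
  qed
  have fin: "finite (set_pmf \<pi>)" using finsupp tr by blast
  show "finite (E c)" using Eeq fin by simp
  have "set_prob (E c) = (\<Sum>y\<in>set_pmf \<pi>. comp_prob (c @ [(a,\<pi>,y)]))"
    unfolding set_prob_def Eeq by (subst sum.reindex) (auto simp: inj_on_def)
  also have "\<dots> = (\<Sum>y\<in>set_pmf \<pi>. comp_prob c * pmf \<pi> y)"
    by (simp add: comp_prob_append)
  also have "\<dots> = comp_prob c * (\<Sum>y\<in>set_pmf \<pi>. pmf \<pi> y)" by (simp add: sum_distrib_left)
  also have "\<dots> = comp_prob c" using sum_pmf_eq_1[OF fin] by simp
  finally show "comp_prob c = set_prob (E c)" by simp
qed

lemma E_disj: "c1 \<noteq> c2 \<Longrightarrow> E c1 \<inter> E c2 = {}"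
  unfolding E_def by auto

lemma C_disj: "b1 \<noteq> b2 \<Longrightarrow> C (\<alpha>@[b1]) \<inter> C (\<alpha>@[b2]) = {}"
  unfolding C_def comps_tr_def by auto

lemma I:
  assumes B: "finite B" "\<And>b. b \<notin> B \<Longrightarrow> C (\<alpha>@[b]) = {}"
  shows "set_prob (C \<alpha>) = set_prob (H \<alpha>) + (\<Sum>b\<in>B. set_prob (C (\<alpha>@[b])))"
proof -
  define N where "N = C \<alpha> - comps_max TZ z0"
  have HC: "H \<alpha> \<subseteq> C \<alpha>" unfolding H_def C_def comps_tr_def comps_max_def by blast
  have CHN: "C \<alpha> = H \<alpha> \<union> N" "H \<alpha> \<inter> N = {}"
    unfolding N_def H_def C_def comps_tr_def comps_max_def by blast+
  have fC: "finite (C \<alpha>)" by (rule finite_C)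
  have fH: "finite (H \<alpha>)" using HC fC finite_subset by blast
  have fN: "finite N" unfolding N_def using fC by simp
  have 1: "set_prob (C \<alpha>) = set_prob (H \<alpha>) + set_prob N"
    unfolding set_prob_def CHN(1) by (rule sum.union_disjoint[OF fH fN CHN(2)])
  have Ccomps: "\<And>c. c \<in> C \<alpha> \<Longrightarrow> c \<in> comps TZ z0" unfolding C_def comps_tr_def by blast
  have fE: "\<And>c. c \<in> C \<alpha> \<Longrightarrow> finite (E c)"
  proof -
    fix c assume "c \<in> C \<alpha>"
    show "finite (E c)"
    proof (cases "c \<in> comps_max TZ z0")
      case True then show ?thesis using E_max by simp
    next
      case False then show ?thesis using OS(2) Ccomps \<open>c \<in> C \<alpha>\<close> by blast
    qed
  qed
  have Neq: "\<And>c. c \<in> N \<Longrightarrow> comp_prob c = set_prob (E c)"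
    using OS(1) Ccomps unfolding N_def by blast
  have "set_prob N = (\<Sum>c\<in>N. set_prob (E c))"
    unfolding set_prob_def using Neq unfolding set_prob_def by (rule sum.cong[OF refl])
  also have "\<dots> = (\<Sum>c\<in>C \<alpha>. set_prob (E c))"
  proof (rule sum.mono_neutral_left[OF fC])
    show "N \<subseteq> C \<alpha>" unfolding N_def by blast
    show "\<forall>i\<in>C \<alpha> - N. set_prob (E i) = 0"
      unfolding N_def using E_max by (simp add: set_prob_def)
  qed
  also have "\<dots> = set_prob (\<Union>c\<in>C \<alpha>. E c)"
    unfolding set_prob_def
    by (rule sum.UNION_disjoint[symmetric]) (use fC fE E_disj in blast)+
  also have "(\<Union>c\<in>C \<alpha>. E c) = (\<Union>b\<in>B. C (\<alpha>@[b]))"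
  proof
    show "(\<Union>c\<in>C \<alpha>. E c) \<subseteq> (\<Union>b\<in>B. C (\<alpha>@[b]))"
    proof
      fix e assume "e \<in> (\<Union>c\<in>C \<alpha>. E c)"
      then obtain c x where cx: "c \<in> C \<alpha>" "e = c @ [x]" "c @ [x] \<in> comps TZ z0"
        unfolding E_def by blast
      then have "trace_of c = \<alpha>" unfolding C_def comps_tr_def by blast
      then have "e \<in> C (\<alpha>@[fst x])" using cx unfolding C_def comps_tr_def by simp
      moreover then have "fst x \<in> B" using B(2) by blast
      ultimately show "e \<in> (\<Union>b\<in>B. C (\<alpha>@[b]))" by blast
    qed
    show "(\<Union>b\<in>B. C (\<alpha>@[b])) \<subseteq> (\<Union>c\<in>C \<alpha>. E c)"
    proof
      fix e assume "e \<in> (\<Union>b\<in>B. C (\<alpha>@[b]))"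
      then obtain b where e: "e \<in> comps TZ z0" "trace_of e = \<alpha>@[b]" unfolding C_def comps_tr_def by blast
      then have "e \<noteq> []" by auto
      then obtain e' x where ee: "e = e' @ [x]" by (metis rev_exhaust)
      have "trace_of e' = \<alpha>" using e(2) ee by simp
      moreover have "e' \<in> comps TZ z0" using e(1) ee comps_prefix by metis
      ultimately have "e' \<in> C \<alpha>" unfolding C_def comps_tr_def by blast
      moreover have "e \<in> E e'" using e ee unfolding E_def by blast
      ultimately show "e \<in> (\<Union>c\<in>C \<alpha>. E c)" by blast
    qed
  qed
  also have "set_prob (\<Union>b\<in>B. C (\<alpha>@[b])) = (\<Sum>b\<in>B. set_prob (C (\<alpha>@[b])))"
    unfolding set_prob_def
    by (rule sum.UNION_disjoint) (use B finite_C C_disj in blast)+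
  finally show ?thesis using 1 by simp
qed


lemma finite_comps_bd:
  assumes bd: "\<forall>c\<in>comps TZ z0. length c \<le> N"
  shows "finite (comps TZ z0)"
proof -
  have "comps TZ z0 = {c \<in> comps TZ z0. length c \<le> N}" using bd by blast
  then show ?thesis using finite_len by metis
qed

lemma A:
  assumes bd: "\<forall>c\<in>comps TZ z0. length c \<le> N"
  shows "c \<in> comps TZ z0 \<Longrightarrow> comp_prob c = set_prob {c' \<in> comps_max TZ z0. \<exists>d. c' = c @ d}"
proof (induction "N - length c" arbitrary: c rule: less_induct)
  case less
  define M where "M c = {c' \<in> comps_max TZ z0. \<exists>d. c' = c @ d}" for c
  have fc: "finite (comps TZ z0)" using finite_comps_bd[OF bd] .
  have fM: "\<And>c. finite (M c)" unfolding M_def comps_max_def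
    by (rule finite_subset[OF _ fc]) blast
  have cc: "c \<in> comps TZ z0" by (rule less.prems)
  show ?case
  proof (cases "c \<in> comps_max TZ z0")
    case True
    have "M c = {c}"
    proof
      show "M c \<subseteq> {c}"
      proof
        fix c' assume "c' \<in> M c"
        then obtain d where d: "c' = c @ d" "c' \<in> comps TZ z0" unfolding M_def comps_max_def by blast
        then have "d = []" using True unfolding comps_max_def by blast
        then show "c' \<in> {c}" using d by simp
      qed
      show "{c} \<subseteq> M c" using True unfolding M_def by (simp add: exI[of _ "[]"])
    qed
    then show ?thesis unfolding M_def[symmetric] by (simp add: set_prob_def)
  next
    case False
    have "M c = (\<Union>e\<in>E c. M e)"
    proof
      show "M c \<subseteq> (\<Union>e\<in>E c. M e)"
      proof
        fix c' assume "c' \<in> M c"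
        then obtain d where d: "c' = c @ d" "c' \<in> comps_max TZ z0" unfolding M_def by blast
        have "d \<noteq> []"
        proof
          assume "d = []" then show False using d False by simp
        qed
        then obtain x d' where "d = x # d'" by (cases d) auto
        with d have c': "c' = (c @ [x]) @ d'" by simp
        have "c' \<in> comps TZ z0" using d unfolding comps_max_def by blast
        then have "c @ [x] \<in> comps TZ z0" using c' comps_prefix by metis
        then have "c @ [x] \<in> E c" unfolding E_def by blast
        moreover have "c' \<in> M (c @ [x])" unfolding M_def using c' d(2) by blast
        ultimately show "c' \<in> (\<Union>e\<in>E c. M e)" by blast
      qed
      show "(\<Union>e\<in>E c. M e) \<subseteq> M c"
      proof
        fix c' assume "c' \<in> (\<Union>e\<in>E c. M e)"
        then obtain x d where "c' = (c @ [x]) @ d" "c' \<in> comps_max TZ z0" unfolding M_def E_def by blast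
        then show "c' \<in> M c" unfolding M_def by (metis (mono_tags, lifting) append_assoc mem_Collect_eq)
      qed
    qed
    have disj: "\<forall>e1\<in>E c. \<forall>e2\<in>E c. e1 \<noteq> e2 \<longrightarrow> M e1 \<inter> M e2 = {}"
    proof (intro ballI impI)
      fix e1 e2 assume "e1 \<in> E c" "e2 \<in> E c" "e1 \<noteq> e2"
      then have l: "length e1 = length e2" unfolding E_def by auto
      show "M e1 \<inter> M e2 = {}"
      proof (rule ccontr)
        assume "M e1 \<inter> M e2 \<noteq> {}"
        then obtain c' d1 d2 where h1: "c' = e1 @ d1" and h2: "c' = e2 @ d2" unfolding M_def by blast
        have "e1 = take (length e1) c'" using h1 by simp
        moreover have "e2 = take (length e2) c'" using h2 by simp
        ultimately show False using l \<open>e1 \<noteq> e2\<close> by simp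
      qed
    qed
    have fE: "finite (E c)" using OS(2)[OF cc False] .
    have "set_prob (M c) = (\<Sum>e\<in>E c. set_prob (M e))"
      unfolding \<open>M c = (\<Union>e\<in>E c. M e)\<close> set_prob_def
      by (rule sum.UNION_disjoint[OF fE]) (use fM disj in blast)+
    also have "\<dots> = (\<Sum>e\<in>E c. comp_prob e)"
    proof (rule sum.cong[OF refl])
      fix e assume e: "e \<in> E c"
      then obtain x where ex: "e = c @ [x]" "e \<in> comps TZ z0" unfolding E_def by blast
      then have "length e \<le> N" using bd by blast
      then have lt: "N - length e < N - length c" using ex by simp
      have "comp_prob e = set_prob (M e)" unfolding M_def by (rule less.hyps[OF lt ex(2)])
      then show "set_prob (M e) = comp_prob e" by simp
    qed
    also have "\<dots> = comp_prob c" using OS(1)[OF cc False] by (simp add: set_prob_def)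
    finally show ?thesis unfolding M_def by simp
  qed
qed

lemma total:
  assumes bd: "\<forall>c\<in>comps TZ z0. length c \<le> N"
  shows "set_prob (comps_max TZ z0) = 1"
proof -
  have "[] \<in> comps TZ z0" by (simp add: comps_def)
  from A[OF bd this] show ?thesis by simp
qed

end


lemma pmf_eq_supp:
  assumes fin: "finite (set_pmf p)" and eq: "\<forall>y\<in>set_pmf p. pmf q y = pmf p y"
  shows "p = q"
proof (rule pmf_eqI)
  fix y
  show "pmf p y = pmf q y"
  proof (cases "y \<in> set_pmf p")
    case True then show ?thesis using eq by simp
  next
    case False
    have 1: "(\<Sum>x\<in>set_pmf p. pmf q x) = 1"
      using eq sum_pmf_eq_1[OF fin, of p] by simp
    have "measure q (insert y (set_pmf p)) = pmf q y + (\<Sum>x\<in>set_pmf p. pmf q x)"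
      using fin False by (simp add: measure_measure_pmf_finite)
    moreover have "measure q (insert y (set_pmf p)) \<le> 1" by (rule measure_pmf.prob_le_1)
    ultimately have "pmf q y \<le> 0" using 1 by simp
    then show ?thesis using False by (simp add: set_pmf_iff)
  qed
qed

locale reso =
  fixes T :: "('s,'a) pts" and s :: 's and Z :: "nat set" and TZ :: "(nat,'a) pts"
    and corr :: "nat \<Rightarrow> 's" and z0 :: nat
  assumes isres: "is_resolution T s Z TZ corr z0" and ok: "pts_ok T"
begin

lemma corr0: "corr z0 = s" using isres by (simp add: is_resolution_def)

lemma trans_T:
  assumes "(z,a,\<pi>)\<in>TZ"
  shows "(corr z, a, map_pmf corr \<pi>) \<in> T" "inj_on corr (set_pmf \<pi>)" "finite (set_pmf \<pi>)"
proof -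
  obtain \<pi>' where p: "(corr z,a,\<pi>') \<in> T" "inj_on corr (set_pmf \<pi>)"
      "\<forall>y\<in>set_pmf \<pi>. pmf \<pi> y = pmf \<pi>' (corr y)"
    using isres assms unfolding is_resolution_def by fast
  show "inj_on corr (set_pmf \<pi>)" by (rule p(2))
  have f': "finite (set_pmf \<pi>')" using ok p(1) unfolding pts_ok_def by blast
  have "corr ` set_pmf \<pi> \<subseteq> set_pmf \<pi>'"
    using p(3) by (auto simp: set_pmf_iff)
  then have "finite (corr ` set_pmf \<pi>)" using f' finite_subset by blast
  then show fin: "finite (set_pmf \<pi>)" using p(2) finite_imageD by blast
  have "map_pmf corr \<pi> = \<pi>'"
  proof (rule pmf_eq_supp)
    show "finite (set_pmf (map_pmf corr \<pi>))" using fin by simp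
    show "\<forall>y\<in>set_pmf (map_pmf corr \<pi>). pmf \<pi>' y = pmf (map_pmf corr \<pi>) y"
      using p(3) pmf_map_inj[OF p(2)] by auto
  qed
  then show "(corr z, a, map_pmf corr \<pi>) \<in> T" using p(1) by simp
qed

lemma det_Z: "(z,a,\<pi>)\<in>TZ \<Longrightarrow> (z,b,\<rho>)\<in>TZ \<Longrightarrow> a = b \<and> \<pi> = \<rho>"
  using isres unfolding is_resolution_def by fast

sublocale dpts TZ z0
  by unfold_locales (use det_Z trans_T(3) in blast)+

definition cmap :: "('a \<times> nat pmf \<times> nat) list \<Rightarrow> ('a \<times> 's pmf \<times> 's) list" where
  "cmap c = map (\<lambda>(a,\<pi>,y). (a, map_pmf corr \<pi>, corr y)) c"

lemma cmap_Cons[simp]: "cmap ((a,\<pi>,y)#c) = (a, map_pmf corr \<pi>, corr y) # cmap c"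
  by (simp add: cmap_def)
lemma cmap_Nil[simp]: "cmap [] = []" by (simp add: cmap_def)

lemma cmap_comp: "is_comp TZ z c \<Longrightarrow> is_comp T (corr z) (cmap c) \<and> comp_prob (cmap c) = comp_prob c"
proof (induction c arbitrary: z)
  case Nil then show ?case by simp
next
  case (Cons x c)
  obtain a \<pi> y where x: "x = (a,\<pi>,y)" by (cases x) auto
  with Cons.prems have h: "(z,a,\<pi>)\<in>TZ" "y \<in> set_pmf \<pi>" "is_comp TZ y c" by auto
  show ?case using Cons.IH[OF h(3)] trans_T[OF h(1)] h(2) pmf_map_inj[of corr \<pi> y] x by auto
qed

lemma cmap_trace[simp]: "trace_of (cmap c) = trace_of c"
  by (induction c) (auto simp: cmap_def trace_of_def)

lemma cmap_inj: "c1 \<in> comps TZ z \<Longrightarrow> c2 \<in> comps TZ z \<Longrightarrow> cmap c1 = cmap c2 \<Longrightarrow> c1 = c2"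
proof (induction c1 arbitrary: z c2)
  case Nil then show ?case by (simp add: cmap_def)
next
  case (Cons x c1)
  obtain a \<pi> y where x: "x = (a,\<pi>,y)" by (cases x) auto
  from Cons.prems(3) obtain x2 c2' where c2: "c2 = x2 # c2'" by (cases c2) (auto simp: cmap_def)
  obtain b \<rho> y2 where x2: "x2 = (b,\<rho>,y2)" by (cases x2) auto
  have h1: "(z,a,\<pi>)\<in>TZ" "y \<in> set_pmf \<pi>" "c1 \<in> comps TZ y"
    using Cons.prems(1) x by (auto simp: comps_def)
  have h2: "(z,b,\<rho>)\<in>TZ" "y2 \<in> set_pmf \<rho>" "c2' \<in> comps TZ y2"
    using Cons.prems(2) c2 x2 by (auto simp: comps_def)
  have ab: "a = b" "\<pi> = \<rho>" using det_Z h1(1) h2(1) by blast+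
  have "corr y = corr y2" "cmap c1 = cmap c2'" using Cons.prems(3) x c2 x2 by simp_all
  then have "y = y2" using trans_T(2)[OF h1(1)] h1(2) h2(2) ab inj_on_def by metis
  then show ?case using Cons.IH[OF h1(3) _ \<open>cmap c1 = cmap c2'\<close>] h2(3) x c2 x2 ab by simp
qed

lemma bounded:
  assumes "finite_proc T s"
  shows "\<exists>N. \<forall>c\<in>comps TZ z0. length c \<le> N"
proof -
  obtain N where N: "\<forall>c\<in>comps T s. length c \<le> N" using assms unfolding finite_proc_def by blast
  have "\<forall>c\<in>comps TZ z0. length c \<le> N"
  proof
    fix c assume "c \<in> comps TZ z0"
    then have "is_comp TZ z0 c" by (simp add: comps_def)
    then have "is_comp T s (cmap c)" using cmap_comp corr0 by metis
    then have "cmap c \<in> comps T s" by (simp add: comps_def)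
    then have "length (cmap c) \<le> N" using N by blast
    then show "length c \<le> N" by (simp add: cmap_def)
  qed
  then show ?thesis by blast
qed

lemma H_sum: "\<exists>X \<subseteq> {c \<in> comps T s. trace_of c = \<alpha>}. set_prob (H \<alpha>) = sum comp_prob X"
proof -
  let ?X = "cmap ` H \<alpha>"
  have Hc: "H \<alpha> \<subseteq> comps TZ z0" unfolding H_def comps_max_def by blast
  have Ht: "\<And>c. c \<in> H \<alpha> \<Longrightarrow> trace_of c = \<alpha>" unfolding H_def by blast
  have cm: "\<And>c. c \<in> H \<alpha> \<Longrightarrow> is_comp T s (cmap c) \<and> comp_prob (cmap c) = comp_prob c"
  proof -
    fix c assume "c \<in> H \<alpha>"
    then have "is_comp TZ z0 c" using Hc by (auto simp: comps_def)
    then show "is_comp T s (cmap c) \<and> comp_prob (cmap c) = comp_prob c" using cmap_comp corr0 by metis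
  qed
  have Xs: "?X \<subseteq> {c \<in> comps T s. trace_of c = \<alpha>}"
  proof
    fix x assume "x \<in> ?X"
    then obtain c where "c \<in> H \<alpha>" "x = cmap c" by blast
    then show "x \<in> {c \<in> comps T s. trace_of c = \<alpha>}" using cm Ht by (simp add: comps_def)
  qed
  have inj: "inj_on cmap (H \<alpha>)"
  proof (rule inj_onI)
    fix x y assume "x \<in> H \<alpha>" "y \<in> H \<alpha>" "cmap x = cmap y"
    then show "x = y" using cmap_inj Hc by blast
  qed
  have "sum comp_prob ?X = sum (comp_prob \<circ> cmap) (H \<alpha>)" by (rule sum.reindex[OF inj])
  also have "\<dots> = set_prob (H \<alpha>)" unfolding set_prob_def
    by (rule sum.cong[OF refl]) (simp add: cm)
  finally have "set_prob (H \<alpha>) = sum comp_prob ?X" by simp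
  then show ?thesis using Xs by blast
qed

end


lemma dtf_bounds: "0 \<le> dtf x y" "dtf x y \<le> 1" by (auto simp: dtf_def)

lemma coupling_fin:
  assumes "is_coupling \<omega> \<Psi>1 \<Psi>2" "finite (set_pmf \<Psi>1)" "finite (set_pmf \<Psi>2)"
  shows "finite (set_pmf \<omega>)"
proof -
  have "set_pmf \<omega> \<subseteq> set_pmf \<Psi>1 \<times> set_pmf \<Psi>2"
  proof
    fix p assume p: "p \<in> set_pmf \<omega>"
    have "fst p \<in> set_pmf (map_pmf fst \<omega>)" "snd p \<in> set_pmf (map_pmf snd \<omega>)" using p by auto
    then show "p \<in> set_pmf \<Psi>1 \<times> set_pmf \<Psi>2" using assms(1) unfolding is_coupling_def
      by (cases p) auto
  qed
  then show ?thesis using assms(2,3) finite_subset by blast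
qed

lemma cv_nonneg: "0 \<le> (\<Sum>p\<in>set_pmf \<omega>. pmf \<omega> p * dtf (fst p) (snd p))"
  by (rule sum_nonneg) (simp add: dtf_bounds)

lemma DS_ne: "{(\<Sum>p\<in>set_pmf \<omega>. pmf \<omega> p * dtf (fst p) (snd p)) | \<omega>. is_coupling \<omega> \<Psi>1 \<Psi>2} \<noteq> {}"
proof -
  have "is_coupling (pair_pmf \<Psi>1 \<Psi>2) \<Psi>1 \<Psi>2"
    by (simp add: is_coupling_def map_fst_pair_pmf map_snd_pair_pmf)
  then show ?thesis by blast
qed

lemma DS_bdd: "bdd_below {(\<Sum>p\<in>set_pmf \<omega>. pmf \<omega> p * dtf (fst p) (snd p)) | \<omega>. is_coupling \<omega> \<Psi>1 \<Psi>2}"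
  by (rule bdd_belowI[of _ 0]) (auto simp: cv_nonneg)

lemma D_nonneg: "0 \<le> Dtdf \<Psi>1 \<Psi>2"
  unfolding Dtdf_def by (rule cInf_greatest[OF DS_ne]) (auto simp: cv_nonneg)

lemma D_le_cv: "is_coupling \<omega> \<Psi>1 \<Psi>2 \<Longrightarrow> Dtdf \<Psi>1 \<Psi>2 \<le> (\<Sum>p\<in>set_pmf \<omega>. pmf \<omega> p * dtf (fst p) (snd p))"
  unfolding Dtdf_def by (rule cInf_lower[OF _ DS_bdd]) blast

lemma D_self: "Dtdf \<Psi> \<Psi> = 0"
proof -
  let ?\<omega> = "map_pmf (\<lambda>x. (x,x)) \<Psi>"
  have c: "is_coupling ?\<omega> \<Psi> \<Psi>"
    by (simp add: is_coupling_def map_pmf_comp)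
  have "(\<Sum>p\<in>set_pmf ?\<omega>. pmf ?\<omega> p * dtf (fst p) (snd p)) = 0"
    by (rule sum.neutral) (auto simp: dtf_def)
  then show ?thesis using D_le_cv[OF c] D_nonneg[of \<Psi> \<Psi>] by simp
qed

lemma D_le1:
  assumes "finite (set_pmf \<Psi>1)" "finite (set_pmf \<Psi>2)"
  shows "Dtdf \<Psi>1 \<Psi>2 \<le> 1"
proof -
  let ?\<omega> = "pair_pmf \<Psi>1 \<Psi>2"
  have c: "is_coupling ?\<omega> \<Psi>1 \<Psi>2"
    by (simp add: is_coupling_def map_fst_pair_pmf map_snd_pair_pmf)
  have f: "finite (set_pmf ?\<omega>)" using assms by simp
  have "(\<Sum>p\<in>set_pmf ?\<omega>. pmf ?\<omega> p * dtf (fst p) (snd p)) \<le> (\<Sum>p\<in>set_pmf ?\<omega>. pmf ?\<omega> p)"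
    by (rule sum_mono) (simp add: dtf_bounds mult_left_le)
  also have "\<dots> = 1" by (rule sum_pmf_eq_1[OF f]) simp
  finally show ?thesis using D_le_cv[OF c] by simp
qed

lemma pmf_as_sum:
  assumes f: "finite (set_pmf \<omega>)"
  shows "pmf (map_pmf g \<omega>) x = (\<Sum>p\<in>set_pmf \<omega>. pmf \<omega> p * (if g p = x then 1 else 0))"
proof -
  have "pmf (map_pmf g \<omega>) x = measure \<omega> (g -` {x})" by (rule pmf_map)
  also have "\<dots> = measure \<omega> (g -` {x} \<inter> set_pmf \<omega>)" by (rule measure_Int_set_pmf[symmetric])
  also have "\<dots> = sum (pmf \<omega>) (g -` {x} \<inter> set_pmf \<omega>)"
    using f by (simp add: measure_measure_pmf_finite)
  also have "\<dots> = sum (pmf \<omega>) {p \<in> set_pmf \<omega>. g p = x}"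
    by (rule sum.cong) auto
  also have "\<dots> = (\<Sum>p\<in>set_pmf \<omega>. if g p = x then pmf \<omega> p else 0)"
    by (rule sum.inter_filter[OF f])
  finally show ?thesis by (simp add: if_distrib cong: if_cong)
qed

lemma D_ge:
  assumes f1: "finite (set_pmf \<Psi>1)" and f2: "finite (set_pmf \<Psi>2)"
  shows "\<bar>pmf \<Psi>1 \<Phi> - pmf \<Psi>2 \<Phi>\<bar> \<le> Dtdf \<Psi>1 \<Psi>2"
  unfolding Dtdf_def
proof (rule cInf_greatest[OF DS_ne])
  fix x assume "x \<in> {(\<Sum>p\<in>set_pmf \<omega>. pmf \<omega> p * dtf (fst p) (snd p)) | \<omega>. is_coupling \<omega> \<Psi>1 \<Psi>2}"
  then obtain \<omega> where c: "is_coupling \<omega> \<Psi>1 \<Psi>2" and x: "x = (\<Sum>p\<in>set_pmf \<omega>. pmf \<omega> p * dtf (fst p) (snd p))"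
    by blast
  have f: "finite (set_pmf \<omega>)" using coupling_fin[OF c f1 f2] .
  have e1: "pmf \<Psi>1 \<Phi> = (\<Sum>p\<in>set_pmf \<omega>. pmf \<omega> p * (if fst p = \<Phi> then 1 else 0))"
    using pmf_as_sum[OF f, of fst \<Phi>] c by (simp add: is_coupling_def)
  have e2: "pmf \<Psi>2 \<Phi> = (\<Sum>p\<in>set_pmf \<omega>. pmf \<omega> p * (if snd p = \<Phi> then 1 else 0))"
    using pmf_as_sum[OF f, of snd \<Phi>] c by (simp add: is_coupling_def)
  have "pmf \<Psi>1 \<Phi> - pmf \<Psi>2 \<Phi> = (\<Sum>p\<in>set_pmf \<omega>. pmf \<omega> p * ((if fst p = \<Phi> then 1 else 0) - (if snd p = \<Phi> then 1 else 0)))"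
    unfolding e1 e2 by (simp add: sum_subtractf right_diff_distrib)
  also have "\<dots> \<le> x" unfolding x
    by (rule sum_mono) (rule mult_left_mono, auto simp: dtf_def)
  finally have a: "pmf \<Psi>1 \<Phi> - pmf \<Psi>2 \<Phi> \<le> x" .
  have "pmf \<Psi>2 \<Phi> - pmf \<Psi>1 \<Phi> = (\<Sum>p\<in>set_pmf \<omega>. pmf \<omega> p * ((if snd p = \<Phi> then 1 else 0) - (if fst p = \<Phi> then 1 else 0)))"
    unfolding e1 e2 by (simp add: sum_subtractf right_diff_distrib)
  also have "\<dots> \<le> x" unfolding x
    by (rule sum_mono) (rule mult_left_mono, auto simp: dtf_def)
  finally have b: "pmf \<Psi>2 \<Phi> - pmf \<Psi>1 \<Phi> \<le> x" .
  show "\<bar>pmf \<Psi>1 \<Phi> - pmf \<Psi>2 \<Phi>\<bar> \<le> x" using a b by linarith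
qed

lemma sup_zero:
  fixes A :: "real set"
  assumes "A \<noteq> {}" "\<forall>a\<in>A. 0 \<le> a \<and> a \<le> 1"
  shows "0 \<le> Sup A" "Sup A = 0 \<longleftrightarrow> (\<forall>a\<in>A. a = 0)"
proof -
  have bdd: "bdd_above A" using assms(2) by (intro bdd_aboveI[of _ 1]) auto
  obtain a0 where "a0 \<in> A" using assms(1) by blast
  then show "0 \<le> Sup A" using assms(2) cSup_upper[OF _ bdd] by (meson order_trans)
  show "Sup A = 0 \<longleftrightarrow> (\<forall>a\<in>A. a = 0)"
  proof
    assume S: "Sup A = 0"
    show "\<forall>a\<in>A. a = 0"
    proof
      fix a assume "a \<in> A"
      then have "a \<le> Sup A" "0 \<le> a" using cSup_upper[OF _ bdd] assms(2) by blast+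
      then show "a = 0" using S by simp
    qed
  next
    assume z: "\<forall>a\<in>A. a = 0"
    have "Sup A \<le> 0" using z by (intro cSup_least[OF assms(1)]) fastforce
    moreover have "0 \<le> Sup A" using \<open>a0 \<in> A\<close> z cSup_upper[OF _ bdd] by metis
    ultimately show "Sup A = 0" by simp
  qed
qed

lemma inf_bounds:
  fixes B :: "real set"
  assumes "B \<noteq> {}" "\<forall>b\<in>B. 0 \<le> b \<and> b \<le> 1"
  shows "0 \<le> Inf B \<and> Inf B \<le> 1"
proof -
  have bdd: "bdd_below B" using assms(2) by (intro bdd_belowI[of _ 0]) auto
  obtain b0 where "b0 \<in> B" using assms(1) by blast
  then have "Inf B \<le> 1" using assms(2) cInf_lower[OF _ bdd] by (meson order_trans)
  moreover have "0 \<le> Inf B" using assms by (intro cInf_greatest) auto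
  ultimately show ?thesis by simp
qed

lemma haus0:
  fixes D :: "'b \<Rightarrow> 'b \<Rightarrow> real"
  assumes b: "\<And>x y. x \<in> X \<union> Y \<Longrightarrow> y \<in> X \<union> Y \<Longrightarrow> 0 \<le> D x y \<and> D x y \<le> 1"
    and ne: "X \<noteq> {}" "Y \<noteq> {}"
  shows "hausdorff D X Y = 0 \<longleftrightarrow> (\<forall>x\<in>X. Inf (D x ` Y) = 0) \<and> (\<forall>y\<in>Y. Inf (D y ` X) = 0)"
proof -
  have i1: "\<forall>x\<in>X. 0 \<le> Inf (D x ` Y) \<and> Inf (D x ` Y) \<le> 1"
    using b ne by (intro ballI inf_bounds) auto
  have i2: "\<forall>y\<in>Y. 0 \<le> Inf (D y ` X) \<and> Inf (D y ` X) \<le> 1"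
    using b ne by (intro ballI inf_bounds) auto
  have h: "hausdorff D X Y = max (Sup ((\<lambda>x. Inf (D x ` Y)) ` X)) (Sup ((\<lambda>y. Inf (D y ` X)) ` Y))"
    unfolding hausdorff_def sup0_def inf1_def using ne by simp
  have s1: "0 \<le> Sup ((\<lambda>x. Inf (D x ` Y)) ` X)"
       "Sup ((\<lambda>x. Inf (D x ` Y)) ` X) = 0 \<longleftrightarrow> (\<forall>x\<in>X. Inf (D x ` Y) = 0)"
    using sup_zero[of "(\<lambda>x. Inf (D x ` Y)) ` X"] ne i1 by auto
  have s2: "0 \<le> Sup ((\<lambda>y. Inf (D y ` X)) ` Y)"
       "Sup ((\<lambda>y. Inf (D y ` X)) ` Y) = 0 \<longleftrightarrow> (\<forall>y\<in>Y. Inf (D y ` X) = 0)"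
    using sup_zero[of "(\<lambda>y. Inf (D y ` X)) ` Y"] ne i2 by auto
  have m: "\<And>a b::real. 0 \<le> a \<Longrightarrow> 0 \<le> b \<Longrightarrow> (max a b = 0) = (a = 0 \<and> b = 0)"
    by (auto simp: max_def)
  have "hausdorff D X Y = 0 \<longleftrightarrow> (Sup ((\<lambda>x. Inf (D x ` Y)) ` X) = 0 \<and> Sup ((\<lambda>y. Inf (D y ` X)) ` Y) = 0)"
    using h m[OF s1(1) s2(1)] by presburger
  then show ?thesis using s1(2) s2(2) by blast
qed


lemma comp_prob_nonneg: "0 \<le> comp_prob c"
  unfolding comp_prob_def by (induction c) (auto split: prod.splits)

lemma set_prob_nonneg: "0 \<le> set_prob A"
  unfolding set_prob_def by (rule sum_nonneg) (rule comp_prob_nonneg)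

lemma triv_res: "is_resolution T s {0} {} (\<lambda>_. s) 0"
  unfolding is_resolution_def by simp

lemma comps_empty: "comps {} z = {[]}"
proof -
  have "\<And>c. is_comp {} z c \<longleftrightarrow> c = []"
    by (case_tac c) auto
  then show ?thesis unfolding comps_def by auto
qed

lemma Lsat_ne: "return_pmf TTop \<in> Lsat T s"
proof -
  have cm: "comps_max {} (0::nat) = {[]}" unfolding comps_max_def comps_empty by auto
  have "state_sat T s (return_pmf TTop)"
    unfolding state_sat_def
    by (rule exI[of _ "{0}"], rule exI[of _ "{}"], rule exI[of _ "\<lambda>_. s"], rule exI[of _ 0])
       (simp add: triv_res cm set_prob_def)
  then show ?thesis unfolding Lsat_def by simp
qed

lemma Lsat_fin: "\<Psi> \<in> Lsat T s \<Longrightarrow> finite (set_pmf \<Psi>)" unfolding Lsat_def by blast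

lemma tf_iff: "tf \<alpha> = \<Phi> \<longleftrightarrow> \<alpha> = tr \<Phi>" by (metis tf_tr tr_tf)

context dpts
begin

lemma Hsat: "{c \<in> comps_max TZ z0. comp_sat c \<Phi> \<and> length c = depth \<Phi>} = H (tr \<Phi>)"
  unfolding H_def using sat_iff by blast

lemma mass:
  fixes \<Psi> :: "'a tform pmf"
  assumes bd: "\<forall>c\<in>comps TZ z0. length c \<le> N"
    and fin: "finite (set_pmf \<Psi>)"
    and eq: "\<forall>\<Phi>\<in>set_pmf \<Psi>. set_prob (H (tr \<Phi>)) = pmf \<Psi> \<Phi>"
    and n: "\<Phi>0 \<notin> set_pmf \<Psi>"
  shows "set_prob (H (tr \<Phi>0)) = 0"
proof -
  let ?F = "insert \<Phi>0 (set_pmf \<Psi>)"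
  have fF: "finite ?F" using fin by simp
  have fc: "finite (comps TZ z0)" by (rule finite_comps_bd[OF bd])
  have fH: "\<And>\<Phi>. finite (H (tr \<Phi>))"
    by (rule finite_subset[OF _ fc]) (auto simp: H_def comps_max_def)
  have disj: "\<forall>x\<in>?F. \<forall>y\<in>?F. x \<noteq> y \<longrightarrow> H (tr x) \<inter> H (tr y) = {}"
  proof (intro ballI impI)
    fix x y :: "'a tform" assume "x \<noteq> y"
    then have "tr x \<noteq> tr y" by (simp add: tr_inj)
    then show "H (tr x) \<inter> H (tr y) = {}" unfolding H_def by auto
  qed
  have fm: "finite (comps_max TZ z0)" by (rule finite_subset[OF _ fc]) (auto simp: comps_max_def)
  have "(\<Sum>\<Phi>\<in>?F. set_prob (H (tr \<Phi>))) = set_prob (\<Union>\<Phi>\<in>?F. H (tr \<Phi>))"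
    unfolding set_prob_def by (rule sum.UNION_disjoint[symmetric, OF fF]) (use fH disj in blast)+
  also have "\<dots> \<le> set_prob (comps_max TZ z0)"
    unfolding set_prob_def
    by (rule sum_mono2[OF fm]) (auto simp: H_def comp_prob_nonneg)
  also have "\<dots> = 1" by (rule total[OF bd])
  finally have le: "(\<Sum>\<Phi>\<in>?F. set_prob (H (tr \<Phi>))) \<le> 1" .
  have "(\<Sum>\<Phi>\<in>?F. set_prob (H (tr \<Phi>))) = set_prob (H (tr \<Phi>0)) + (\<Sum>\<Phi>\<in>set_pmf \<Psi>. set_prob (H (tr \<Phi>)))"
    using fin n by (rule sum.insert)
  also have "(\<Sum>\<Phi>\<in>set_pmf \<Psi>. set_prob (H (tr \<Phi>))) = (\<Sum>\<Phi>\<in>set_pmf \<Psi>. pmf \<Psi> \<Phi>)"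
    using eq by simp
  also have "\<dots> = 1" by (rule sum_pmf_eq_1[OF fin]) simp
  finally show ?thesis using le set_prob_nonneg[of "H (tr \<Phi>0)"] by simp
qed

end

context reso
begin

lemma psiR:
  assumes fp: "finite_proc T s"
  shows "\<exists>\<Psi>. \<Psi> \<in> Lsat T s \<and> (\<forall>\<Phi>. pmf \<Psi> \<Phi> = set_prob (H (tr \<Phi>)))"
proof -
  obtain N where bd: "\<forall>c\<in>comps TZ z0. length c \<le> N" using bounded[OF fp] by blast
  define g where "g \<Phi> = set_prob (H (tr \<Phi>))" for \<Phi>
  define A where "A = (\<lambda>c. tf (trace_of c)) ` comps_max TZ z0"
  have fc: "finite (comps TZ z0)" by (rule finite_comps_bd[OF bd])
  have fm: "finite (comps_max TZ z0)" by (rule finite_subset[OF _ fc]) (auto simp: comps_max_def)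
  have fA: "finite A" unfolding A_def using fm by simp
  have g0: "\<And>\<Phi>. 0 \<le> g \<Phi>" unfolding g_def by (rule set_prob_nonneg)
  have gA: "\<And>\<Phi>. \<Phi> \<notin> A \<Longrightarrow> g \<Phi> = 0"
  proof -
    fix \<Phi> assume "\<Phi> \<notin> A"
    have "\<And>c. c \<in> H (tr \<Phi>) \<Longrightarrow> False"
    proof -
      fix c assume "c \<in> H (tr \<Phi>)"
      then have "c \<in> comps_max TZ z0" "tf (trace_of c) = \<Phi>" unfolding H_def by simp_all
      then have "\<Phi> \<in> A" unfolding A_def by blast
      then show False using \<open>\<Phi> \<notin> A\<close> by blast
    qed
    then have "H (tr \<Phi>) = {}" by blast
    then show "g \<Phi> = 0" unfolding g_def set_prob_def by simp
  qed
  have "(\<Sum>\<Phi>\<in>A. g \<Phi>) = set_prob (comps_max TZ z0)"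
  proof -
    have "set_prob (comps_max TZ z0) = (\<Sum>\<Phi>\<in>A. \<Sum>c\<in>{c \<in> comps_max TZ z0. tf (trace_of c) = \<Phi>}. comp_prob c)"
      unfolding set_prob_def A_def by (rule sum.image_gen[OF fm])
    also have "\<dots> = (\<Sum>\<Phi>\<in>A. g \<Phi>)"
    proof (rule sum.cong[OF refl])
      fix \<Phi>
      have "{c \<in> comps_max TZ z0. tf (trace_of c) = \<Phi>} = H (tr \<Phi>)"
        unfolding H_def tf_iff by simp
      then show "(\<Sum>c\<in>{c \<in> comps_max TZ z0. tf (trace_of c) = \<Phi>}. comp_prob c) = g \<Phi>"
        unfolding g_def set_prob_def by simp
    qed
    finally show ?thesis by simp
  qed
  then have sA: "(\<Sum>\<Phi>\<in>A. g \<Phi>) = 1" using total[OF bd] by simp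
  have int: "(\<integral>\<^sup>+x. ennreal (g x) \<partial>count_space UNIV) = 1"
  proof -
    have "(\<integral>\<^sup>+x. ennreal (g x) \<partial>count_space UNIV) = (\<Sum>x\<in>A. ennreal (g x))"
      by (rule nn_integral_count_space'[OF fA]) (simp_all add: gA)
    also have "\<dots> = ennreal (\<Sum>x\<in>A. g x)" by (rule sum_ennreal) (rule g0)
    finally show ?thesis using sA by simp
  qed
  define \<Psi> where "\<Psi> = embed_pmf g"
  have p: "\<And>\<Phi>. pmf \<Psi> \<Phi> = g \<Phi>" unfolding \<Psi>_def by (rule pmf_embed_pmf[OF g0 int])
  have "set_pmf \<Psi> \<subseteq> A"
  proof
    fix \<Phi> assume "\<Phi> \<in> set_pmf \<Psi>"
    then have "g \<Phi> \<noteq> 0" using p set_pmf_iff by metis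
    then show "\<Phi> \<in> A" using gA by blast
  qed
  then have fin: "finite (set_pmf \<Psi>)" using fA finite_subset by blast
  have "state_sat T s \<Psi>"
    unfolding state_sat_def
    by (rule exI[of _ Z], rule exI[of _ TZ], rule exI[of _ corr], rule exI[of _ z0])
       (simp add: isres Hsat p g_def)
  then have "\<Psi> \<in> Lsat T s" using fin unfolding Lsat_def by blast
  then show ?thesis using p unfolding g_def by blast
qed

end


lemma (in reso) is_dpts: "dpts TZ"
  unfolding dpts_def using det_Z trans_T(3) by blast

lemma I_expl:
  assumes "dpts TZ" "finite B" "\<And>b. b \<notin> B \<Longrightarrow> comps_tr TZ z (\<alpha>@[b]) = {}"
  shows "set_prob (comps_tr TZ z \<alpha>) = set_prob {c \<in> comps_max TZ z. trace_of c = \<alpha>} + (\<Sum>b\<in>B. set_prob (comps_tr TZ z (\<alpha>@[b])))"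
proof -
  interpret D: dpts TZ z by (rule assms(1))
  show ?thesis using D.I[OF assms(2)] assms(3) unfolding D.C_def D.H_def by blast
qed

lemma last_tr: "trace_of c = \<alpha> @ [b] \<Longrightarrow> fst (last c) = b"
proof -
  assume h: "trace_of c = \<alpha> @ [b]"
  then have "c \<noteq> []" by auto
  then have "last (map fst c) = fst (last c)" by (rule last_map)
  then show ?thesis using h unfolding trace_of_def by simp
qed

lemma H_from_C:
  fixes TZ TZ' :: "('x,'a) pts"
  assumes d1: "dpts TZ" and d2: "dpts TZ'" and f1: "finite (comps TZ z)" and f2: "finite (comps TZ' z')"
    and eq: "\<forall>\<alpha>. set_prob (comps_tr TZ z \<alpha>) = set_prob (comps_tr TZ' z' \<alpha>)"
  shows "set_prob {c \<in> comps_max TZ z. trace_of c = \<alpha>} = set_prob {c \<in> comps_max TZ' z'. trace_of c = \<alpha>}"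
proof -
  define B where "B = (\<lambda>c. fst (last c)) ` (comps TZ z \<union> comps TZ' z')"
  have fB: "finite B" unfolding B_def using f1 f2 by simp
  have n1: "\<And>b. b \<notin> B \<Longrightarrow> comps_tr TZ z (\<alpha>@[b]) = {}"
  proof -
    fix b assume "b \<notin> B"
    show "comps_tr TZ z (\<alpha>@[b]) = {}"
    proof (rule ccontr)
      assume "comps_tr TZ z (\<alpha>@[b]) \<noteq> {}"
      then obtain c where c: "c \<in> comps TZ z" "trace_of c = \<alpha>@[b]" unfolding comps_tr_def by blast
      then have "b = fst (last c)" using last_tr by metis
      moreover have "c \<in> comps TZ z \<union> comps TZ' z'" using c by blast
      ultimately have "b \<in> B" unfolding B_def by (rule image_eqI)
      then show False using \<open>b \<notin> B\<close> by blast
    qed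
  qed
  have n2: "\<And>b. b \<notin> B \<Longrightarrow> comps_tr TZ' z' (\<alpha>@[b]) = {}"
  proof -
    fix b assume "b \<notin> B"
    show "comps_tr TZ' z' (\<alpha>@[b]) = {}"
    proof (rule ccontr)
      assume "comps_tr TZ' z' (\<alpha>@[b]) \<noteq> {}"
      then obtain c where c: "c \<in> comps TZ' z'" "trace_of c = \<alpha>@[b]" unfolding comps_tr_def by blast
      then have "b = fst (last c)" using last_tr by metis
      moreover have "c \<in> comps TZ z \<union> comps TZ' z'" using c by blast
      ultimately have "b \<in> B" unfolding B_def by (rule image_eqI)
      then show False using \<open>b \<notin> B\<close> by blast
    qed
  qed
  show ?thesis using I_expl[OF d1 fB n1] I_expl[OF d2 fB n2] eq by simp
qed

lemma C_from_H:
  fixes TZ TZ' :: "('x,'a) pts"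
  assumes d1: "dpts TZ" and d2: "dpts TZ'"
    and b1: "\<forall>c\<in>comps TZ z. length c \<le> N" and b2: "\<forall>c\<in>comps TZ' z'. length c \<le> N"
    and eq: "\<forall>\<alpha>. set_prob {c \<in> comps_max TZ z. trace_of c = \<alpha>} = set_prob {c \<in> comps_max TZ' z'. trace_of c = \<alpha>}"
  shows "set_prob (comps_tr TZ z \<alpha>) = set_prob (comps_tr TZ' z' \<alpha>)"
proof (induction "Suc N - length \<alpha>" arbitrary: \<alpha> rule: less_induct)
  case less
  show ?case
  proof (cases "length \<alpha> \<le> N")
    case False
    have "comps_tr TZ z \<alpha> = {}" "comps_tr TZ' z' \<alpha> = {}"
      using b1 b2 False unfolding comps_tr_def by (auto dest: arg_cong[of _ _ length])
    then show ?thesis by (simp add: set_prob_def)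
  next
    case True
    define B where "B = (\<lambda>c. fst (last c)) ` (comps TZ z \<union> comps TZ' z')"
    have f1: "finite (comps TZ z)" by (rule dpts.finite_comps_bd[OF d1 b1])
    have f2: "finite (comps TZ' z')" by (rule dpts.finite_comps_bd[OF d2 b2])
    have fB: "finite B" unfolding B_def using f1 f2 by simp
    have n1: "\<And>b. b \<notin> B \<Longrightarrow> comps_tr TZ z (\<alpha>@[b]) = {}"
    proof -
      fix b assume "b \<notin> B"
      show "comps_tr TZ z (\<alpha>@[b]) = {}"
      proof (rule ccontr)
        assume "comps_tr TZ z (\<alpha>@[b]) \<noteq> {}"
        then obtain c where c: "c \<in> comps TZ z" "trace_of c = \<alpha>@[b]" unfolding comps_tr_def by blast
        then have "b = fst (last c)" using last_tr by metis
        moreover have "c \<in> comps TZ z \<union> comps TZ' z'" using c by blast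
        ultimately have "b \<in> B" unfolding B_def by (rule image_eqI)
        then show False using \<open>b \<notin> B\<close> by blast
      qed
    qed
    have n2: "\<And>b. b \<notin> B \<Longrightarrow> comps_tr TZ' z' (\<alpha>@[b]) = {}"
    proof -
      fix b assume "b \<notin> B"
      show "comps_tr TZ' z' (\<alpha>@[b]) = {}"
      proof (rule ccontr)
        assume "comps_tr TZ' z' (\<alpha>@[b]) \<noteq> {}"
        then obtain c where c: "c \<in> comps TZ' z'" "trace_of c = \<alpha>@[b]" unfolding comps_tr_def by blast
        then have "b = fst (last c)" using last_tr by metis
        moreover have "c \<in> comps TZ z \<union> comps TZ' z'" using c by blast
        ultimately have "b \<in> B" unfolding B_def by (rule image_eqI)
        then show False using \<open>b \<notin> B\<close> by blast
      qed
    qed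
    have IH: "\<And>b. set_prob (comps_tr TZ z (\<alpha>@[b])) = set_prob (comps_tr TZ' z' (\<alpha>@[b]))"
    proof -
      fix b
      have "Suc N - length (\<alpha>@[b]) < Suc N - length \<alpha>" using True by simp
      then show "set_prob (comps_tr TZ z (\<alpha>@[b])) = set_prob (comps_tr TZ' z' (\<alpha>@[b]))"
        by (rule less.hyps)
    qed
    show ?thesis using I_expl[OF d1 fB n1] I_expl[OF d2 fB n2] eq IH by simp
  qed
qed


lemma closure:
  fixes \<Psi> :: "'a tform pmf" and T :: "('s,'a) pts"
  assumes ok: "pts_ok T" and fin: "finite (set_pmf \<Psi>)" and inf0: "Inf (Dtdf \<Psi> ` Lsat T t) = 0"
  shows "state_sat T t \<Psi>"
proof -
  define S where "S \<Phi> = {c \<in> comps T t. trace_of c = tr \<Phi>}" for \<Phi> :: "'a tform"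
  have fS: "\<And>\<Phi>. finite (S \<Phi>)" unfolding S_def by (rule finite_S[OF ok])
  define W where "W = (\<Union>\<Phi>\<in>set_pmf \<Psi>. (\<lambda>X. \<bar>pmf \<Psi> \<Phi> - sum comp_prob X\<bar>) ` Pow (S \<Phi>)) \<union> pmf \<Psi> ` set_pmf \<Psi>"
  have fW: "finite W" unfolding W_def using fin fS by simp
  define W' where "W' = {w \<in> W. 0 < w}"
  have fW': "finite W'" unfolding W'_def using fW by simp
  define \<delta> where "\<delta> = Min (insert 1 W')"
  have dpos: "0 < \<delta>" unfolding \<delta>_def using fW' by (simp add: Min_gr_iff W'_def)
  have dle: "\<And>w. w \<in> W' \<Longrightarrow> \<delta> \<le> w" unfolding \<delta>_def using fW' by simp
  have "Dtdf \<Psi> (return_pmf TTop) \<in> Dtdf \<Psi> ` Lsat T t" using Lsat_ne[of T t] by (rule imageI)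
  then have ne: "Dtdf \<Psi> ` Lsat T t \<noteq> {}" by blast
  have bdd: "bdd_below (Dtdf \<Psi> ` Lsat T t)" by (rule bdd_belowI[of _ 0]) (auto simp: D_nonneg)
  have "Inf (Dtdf \<Psi> ` Lsat T t) < \<delta>" using inf0 dpos by simp
  then obtain \<Psi>'' where P'': "\<Psi>'' \<in> Lsat T t" "Dtdf \<Psi> \<Psi>'' < \<delta>"
    using cInf_less_iff[OF ne bdd] by blast
  have fin'': "finite (set_pmf \<Psi>'')" by (rule Lsat_fin[OF P''(1)])
  have "state_sat T t \<Psi>''" using P''(1) unfolding Lsat_def by blast
  then obtain Z' TZ' corr' z' where res: "is_resolution T t Z' TZ' corr' z'"
    and eq'': "\<forall>\<Phi>\<in>set_pmf \<Psi>''. set_prob {c \<in> comps_max TZ' z'. comp_sat c \<Phi> \<and> length c = depth \<Phi>} = pmf \<Psi>'' \<Phi>"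
    unfolding state_sat_def by blast
  interpret R: reso T t Z' TZ' corr' z' using res ok by (simp add: reso_def)
  have main: "set_prob {c \<in> comps_max TZ' z'. comp_sat c \<Phi> \<and> length c = depth \<Phi>} = pmf \<Psi> \<Phi>"
    if \<Phi>: "\<Phi> \<in> set_pmf \<Psi>" for \<Phi>
  proof -
    have d: "\<bar>pmf \<Psi> \<Phi> - pmf \<Psi>'' \<Phi>\<bar> < \<delta>" using D_ge[OF fin fin'', of \<Phi>] P''(2) by simp
    have "pmf \<Psi> \<Phi> \<in> W" unfolding W_def using \<Phi> by blast
    moreover have "0 < pmf \<Psi> \<Phi>" using \<Phi> by (rule pmf_positive)
    ultimately have "pmf \<Psi> \<Phi> \<in> W'" unfolding W'_def by blast
    then have "\<delta> \<le> pmf \<Psi> \<Phi>" by (rule dle)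
    then have "0 < pmf \<Psi>'' \<Phi>" using d by linarith
    then have \<Phi>'': "\<Phi> \<in> set_pmf \<Psi>''" by (simp add: pmf_positive_iff)
    have e1: "set_prob {c \<in> comps_max TZ' z'. comp_sat c \<Phi> \<and> length c = depth \<Phi>} = pmf \<Psi>'' \<Phi>"
      using eq'' \<Phi>'' by blast
    obtain X where X: "X \<subseteq> S \<Phi>" "set_prob (R.H (tr \<Phi>)) = sum comp_prob X"
      using R.H_sum[of "tr \<Phi>"] unfolding S_def by blast
    have "pmf \<Psi>'' \<Phi> = sum comp_prob X" using e1 X(2) R.Hsat by simp
    have "\<bar>pmf \<Psi> \<Phi> - sum comp_prob X\<bar> \<in> (\<lambda>X. \<bar>pmf \<Psi> \<Phi> - sum comp_prob X\<bar>) ` Pow (S \<Phi>)"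
      using X(1) by blast
    then have "\<bar>pmf \<Psi> \<Phi> - sum comp_prob X\<bar> \<in> W" unfolding W_def using \<Phi> by blast
    then have inW: "\<bar>pmf \<Psi> \<Phi> - pmf \<Psi>'' \<Phi>\<bar> \<in> W" using \<open>pmf \<Psi>'' \<Phi> = sum comp_prob X\<close> by simp
    have "\<bar>pmf \<Psi> \<Phi> - pmf \<Psi>'' \<Phi>\<bar> = 0"
    proof (rule ccontr)
      assume "\<bar>pmf \<Psi> \<Phi> - pmf \<Psi>'' \<Phi>\<bar> \<noteq> 0"
      then have "\<bar>pmf \<Psi> \<Phi> - pmf \<Psi>'' \<Phi>\<bar> \<in> W'" using inW unfolding W'_def by simp
      then have "\<delta> \<le> \<bar>pmf \<Psi> \<Phi> - pmf \<Psi>'' \<Phi>\<bar>" by (rule dle)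
      then show False using d by linarith
    qed
    then show ?thesis using e1 by simp
  qed
  show ?thesis unfolding state_sat_def
    by (rule exI[of _ Z'], rule exI[of _ TZ'], rule exI[of _ corr'], rule exI[of _ z'])
       (use res main in blast)
qed


lemma half:
  fixes T :: "('s,'a) pts"
  assumes ok: "pts_ok T" and fs: "finite_proc T s" and ft: "finite_proc T t"
    and inf: "\<forall>\<Psi>\<in>Lsat T s. Inf (Dtdf \<Psi> ` Lsat T t) = 0"
    and res: "is_resolution T s Z TZ corr z"
  shows "\<exists>Z' TZ' corr' z'. is_resolution T t Z' TZ' corr' z' \<and>
           (\<forall>\<alpha>. set_prob (comps_tr TZ z \<alpha>) = set_prob (comps_tr TZ' z' \<alpha>))"
proof -
  interpret R: reso T s Z TZ corr z using res ok by (simp add: reso_def)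
  obtain N1 where b1: "\<forall>c\<in>comps TZ z. length c \<le> N1" using R.bounded[OF fs] by blast
  obtain \<Psi> where P: "\<Psi> \<in> Lsat T s" "\<forall>\<Phi>. pmf \<Psi> \<Phi> = set_prob (R.H (tr \<Phi>))"
    using R.psiR[OF fs] by blast
  have fin: "finite (set_pmf \<Psi>)" by (rule Lsat_fin[OF P(1)])
  have "state_sat T t \<Psi>" by (rule closure[OF ok fin]) (use inf P(1) in blast)
  then obtain Z' TZ' corr' z' where res': "is_resolution T t Z' TZ' corr' z'"
    and eq': "\<forall>\<Phi>\<in>set_pmf \<Psi>. set_prob {c \<in> comps_max TZ' z'. comp_sat c \<Phi> \<and> length c = depth \<Phi>} = pmf \<Psi> \<Phi>"
    unfolding state_sat_def by blast
  interpret R': reso T t Z' TZ' corr' z' using res' ok by (simp add: reso_def)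
  obtain N2 where b2: "\<forall>c\<in>comps TZ' z'. length c \<le> N2" using R'.bounded[OF ft] by blast
  have eqH': "\<forall>\<Phi>\<in>set_pmf \<Psi>. set_prob (R'.H (tr \<Phi>)) = pmf \<Psi> \<Phi>"
    using eq' R'.Hsat by simp
  have eqH: "\<forall>\<alpha>. set_prob (R.H \<alpha>) = set_prob (R'.H \<alpha>)"
  proof
    fix \<alpha>
    show "set_prob (R.H \<alpha>) = set_prob (R'.H \<alpha>)"
    proof (cases "tf \<alpha> \<in> set_pmf \<Psi>")
      case True
      then show ?thesis using eqH' P(2) by (metis tr_tf)
    next
      case False
      have "set_prob (R'.H (tr (tf \<alpha>))) = 0" by (rule R'.mass[OF b2 fin eqH' False])
      moreover have "pmf \<Psi> (tf \<alpha>) = 0" using False by (simp add: set_pmf_iff)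
      ultimately show ?thesis using P(2) by (metis tr_tf)
    qed
  qed
  have b1': "\<forall>c\<in>comps TZ z. length c \<le> max N1 N2" using b1 by (meson le_max_iff_disj)
  have b2': "\<forall>c\<in>comps TZ' z'. length c \<le> max N1 N2" using b2 by (meson le_max_iff_disj)
  have "\<forall>\<alpha>. set_prob (comps_tr TZ z \<alpha>) = set_prob (comps_tr TZ' z' \<alpha>)"
    using C_from_H[OF R.is_dpts R'.is_dpts b1' b2'] eqH unfolding R.H_def R'.H_def by blast
  then show ?thesis using res' by blast
qed

lemma tsat:
  fixes T :: "('s,'a) pts"
  assumes ok: "pts_ok T" and fs: "finite_proc T s" and ft: "finite_proc T t"
    and te: "\<forall>Z TZ corr z. is_resolution T s Z TZ corr z \<longrightarrow>
       (\<exists>Z' TZ' corr' z'. is_resolution T t Z' TZ' corr' z' \<and>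
          (\<forall>\<alpha>. set_prob (comps_tr TZ z \<alpha>) = set_prob (comps_tr TZ' z' \<alpha>)))"
    and x: "\<Psi> \<in> Lsat T s"
  shows "\<Psi> \<in> Lsat T t"
proof -
  have fin: "finite (set_pmf \<Psi>)" by (rule Lsat_fin[OF x])
  obtain Z TZ corr z where res: "is_resolution T s Z TZ corr z"
    and eq: "\<forall>\<Phi>\<in>set_pmf \<Psi>. set_prob {c \<in> comps_max TZ z. comp_sat c \<Phi> \<and> length c = depth \<Phi>} = pmf \<Psi> \<Phi>"
    using x unfolding Lsat_def state_sat_def by blast
  interpret R: reso T s Z TZ corr z using res ok by (simp add: reso_def)
  obtain Z' TZ' corr' z' where res': "is_resolution T t Z' TZ' corr' z'"
    and eqC: "\<forall>\<alpha>. set_prob (comps_tr TZ z \<alpha>) = set_prob (comps_tr TZ' z' \<alpha>)"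
    using te res by blast
  interpret R': reso T t Z' TZ' corr' z' using res' ok by (simp add: reso_def)
  obtain N1 where b1: "\<forall>c\<in>comps TZ z. length c \<le> N1" using R.bounded[OF fs] by blast
  obtain N2 where b2: "\<forall>c\<in>comps TZ' z'. length c \<le> N2" using R'.bounded[OF ft] by blast
  have eqH: "\<And>\<alpha>. set_prob (R.H \<alpha>) = set_prob (R'.H \<alpha>)"
    unfolding R.H_def R'.H_def
    by (rule H_from_C[OF R.is_dpts R'.is_dpts R.finite_comps_bd[OF b1] R'.finite_comps_bd[OF b2] eqC])
  have sat: "\<forall>\<Phi>\<in>set_pmf \<Psi>. set_prob {c \<in> comps_max TZ' z'. comp_sat c \<Phi> \<and> length c = depth \<Phi>} = pmf \<Psi> \<Phi>"
    using eq eqH R.Hsat R'.Hsat by simp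
  have "state_sat T t \<Psi>" unfolding state_sat_def
    by (rule exI[of _ Z'], rule exI[of _ TZ'], rule exI[of _ corr'], rule exI[of _ z'])
       (use res' sat in blast)
  then show ?thesis using fin unfolding Lsat_def by blast
qed

theorem theorem16:
  fixes T :: "('s,'a) pts" and s t :: 's
  assumes "pts_ok T" and "finite_proc T s" and "finite_proc T t"
  shows "DL T s t = 0 \<longleftrightarrow> trace_equiv T s t"
proof -
  have ne1: "Lsat T s \<noteq> {}" using Lsat_ne[of T s] by blast
  have ne2: "Lsat T t \<noteq> {}" using Lsat_ne[of T t] by blast
  have b: "\<And>x y. x \<in> Lsat T s \<union> Lsat T t \<Longrightarrow> y \<in> Lsat T s \<union> Lsat T t \<Longrightarrow> 0 \<le> Dtdf x y \<and> Dtdf x y \<le> 1"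
  proof -
    fix x y assume "x \<in> Lsat T s \<union> Lsat T t" "y \<in> Lsat T s \<union> Lsat T t"
    then have "finite (set_pmf x)" "finite (set_pmf y)"
      using Lsat_fin[of x T s] Lsat_fin[of x T t] Lsat_fin[of y T s] Lsat_fin[of y T t] by blast+
    then show "0 \<le> Dtdf x y \<and> Dtdf x y \<le> 1" using D_nonneg D_le1 by blast
  qed
  have H: "DL T s t = 0 \<longleftrightarrow> (\<forall>x\<in>Lsat T s. Inf (Dtdf x ` Lsat T t) = 0) \<and> (\<forall>y\<in>Lsat T t. Inf (Dtdf y ` Lsat T s) = 0)"
    unfolding DL_def by (rule haus0[OF b ne1 ne2])
  show ?thesis
  proof
    assume "DL T s t = 0"
    then have i1: "\<forall>x\<in>Lsat T s. Inf (Dtdf x ` Lsat T t) = 0"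
      and i2: "\<forall>y\<in>Lsat T t. Inf (Dtdf y ` Lsat T s) = 0" using H by blast+
    show "trace_equiv T s t" unfolding trace_equiv_def
    proof (intro conjI allI impI)
      fix Z TZ corr z assume "is_resolution T s Z TZ corr z"
      then show "\<exists>Z' TZ' corr' z'. is_resolution T t Z' TZ' corr' z' \<and>
           (\<forall>\<alpha>. set_prob (comps_tr TZ z \<alpha>) = set_prob (comps_tr TZ' z' \<alpha>))"
        by (rule half[OF assms(1,2,3) i1])
    next
      fix Z TZ corr z assume "is_resolution T t Z TZ corr z"
      then show "\<exists>Z' TZ' corr' z'. is_resolution T s Z' TZ' corr' z' \<and>
           (\<forall>\<alpha>. set_prob (comps_tr TZ z \<alpha>) = set_prob (comps_tr TZ' z' \<alpha>))"
        by (rule half[OF assms(1,3,2) i2])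
    qed
  next
    assume te: "trace_equiv T s t"
    have z: "Inf (Dtdf x ` Y) = 0" if "x \<in> Y" for x :: "'a tform pmf" and Y
    proof (rule cInf_eq_minimum)
      have "Dtdf x x \<in> Dtdf x ` Y" using that by (rule imageI)
      then show "0 \<in> Dtdf x ` Y" by (simp add: D_self)
    qed (auto simp: D_nonneg)
    have "\<forall>x\<in>Lsat T s. Inf (Dtdf x ` Lsat T t) = 0"
    proof
      fix x assume "x \<in> Lsat T s"
      then have "x \<in> Lsat T t" using tsat[OF assms(1,2,3)] te unfolding trace_equiv_def by blast
      then show "Inf (Dtdf x ` Lsat T t) = 0" by (rule z)
    qed
    moreover have "\<forall>y\<in>Lsat T t. Inf (Dtdf y ` Lsat T s) = 0"
    proof
      fix y assume "y \<in> Lsat T t"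
      then have "y \<in> Lsat T s" using tsat[OF assms(1,3,2)] te unfolding trace_equiv_def by blast
      then show "Inf (Dtdf y ` Lsat T s) = 0" by (rule z)
    qed
    ultimately show "DL T s t = 0" using H by blast
  qed
qed


end
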